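(* Let $X$ and $Y$ be terms in normal form and let $f$ be a binary constructor (one of $\mathsf{sign},\mathsf{blind},\langle\cdot,\cdot\rangle,\{\cdot\}_\cdot$). If $\Gamma,f(X,Y)\vdash M$ has a cut-free derivation in $\mathcal S$, then so does $\Gamma,X,Y\vdash M$.
   Context: Fix names, variables and constructors $\mathsf{pub}$ (unary), $\mathsf{sign},\mathsf{blind},\langle\cdot,\cdot\rangle,\{\cdot\}_\cdot$ (binary). $E$ is the union of AC-convergent equational theories $E_1,\dots,E_n$ with pairwise disjoint signatures, disjoint from the constructors, each with at most one associative-commutative (AC) binary symbol $\oplus_i$; $E$ is presented by a rewrite system $R_E$ terminating and confluent modulo AC; $\Sigma_E$ is its signature. Terms are ground terms over names, the constructors and $\Sigma_E$; normal form means $R_E$-normal form modulo AC. $\equiv$ is equality modulo AC of all $\oplus_i$; $\approx_E$ equality modulo $E$. Guarded term: a name, a variable, or headed by a constructor. $E$-context: term with holes built only from symbols of $\Sigma_E$. Sequents $\Gamma\vdash M$ have all terms in normal form; $\Gamma,M$ means $\Gamma\cup\{M\}$. A derivation is cut-free if it has no instance of (cut). System $\mathcal S$: (id) $\Gamma\vdash M$ with no premise if $M\approx_E C[M_1,\dots,M_k]$ for an $E$-context $C$ and $M_i\in\Gamma$; (cut) from $\Gamma\vdash M$, $\Gamma,M\vdash T$ infer $\Gamma\vdash T$; ($p_L$) from $\Gamma,\langle M,N\rangle,M,N\vdash T$ infer $\Gamma,\langle M,N\rangle\vdash T$; ($p_R$) from $\Gamma\vdash M,\Gamma\vdash N$ infer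 $\Gamma\vdash\langle M,N\rangle$; ($e_L$) from $\Gamma,\{M\}_K\vdash K$ and $\Gamma,\{M\}_K,M,K\vdash N$ infer $\Gamma,\{M\}_K\vdash N$; ($e_R$) from $\Gamma\vdash M,\Gamma\vdash K$ infer $\Gamma\vdash\{M\}_K$; ($\mathsf{sign}_L$) from $\Gamma,\mathsf{sign}(M,K),\mathsf{pub}(L),M\vdash N$ infer $\Gamma,\mathsf{sign}(M,K),\mathsf{pub}(L)\vdash N$ if $K\equiv L$; ($\mathsf{sign}_R$) from $\Gamma\vdash M,\Gamma\vdash K$ infer $\Gamma\vdash\mathsf{sign}(M,K)$; ($\mathsf{blind}_{L1}$) from $\Gamma,\mathsf{blind}(M,K)\vdash K$ and $\Gamma,\mathsf{blind}(M,K),M,K\vdash N$ infer $\Gamma,\mathsf{blind}(M,K)\vdash N$; ($\mathsf{blind}_R$) from $\Gamma\vdash M,\Gamma\vdash K$ infer $\Gamma\vdash\mathsf{blind}(M,K)$; ($\mathsf{blind}_{L2}$) from $\Gamma,\mathsf{sign}(\mathsf{blind}(M,R),K)\vdash R$ and $\Gamma,\mathsf{sign}(\mathsf{blind}(M,R),K),\mathsf{sign}(M,K),R\vdash N$ infer $\Gamma,\mathsf{sign}(\mathsf{blind}(M,R),K)\vdash N$; ($gs$) from $\Gamma\vdash A$, $\Gamma,A\vdash M$ infer $\Gamma\vdash M$ if $A$ is a guarded subterm of a term in $\Gamma\cup\{M\}$. *)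

theory Defs
  imports Main
begin

text \<open>Terms: variables, names, the constructors pub, sign, blind, pairing and
encryption, and applications of symbols of the equational signature Sigma_E
(symbols of type 'f).\<close>

datatype 'f trm =
    Var nat
  | Nm nat
  | Pub "'f trm"
  | Sign "'f trm" "'f trm"
  | Blind "'f trm" "'f trm"
  | Pair "'f trm" "'f trm"
  | Enc "'f trm" "'f trm"     \<comment> \<open>Enc M K is {M}_K\<close>
  | Fn 'f "'f trm list"

fun subst :: "(nat \<Rightarrow> 'f trm) \<Rightarrow> 'f trm \<Rightarrow> 'f trm" where
  "subst \<sigma> (Var x) = \<sigma> x"
| "subst \<sigma> (Nm n) = Nm n"
| "subst \<sigma> (Pub t) = Pub (subst \<sigma> t)"
| "subst \<sigma> (Sign s t) = Sign (subst \<sigma> s) (subst \<sigma> t)"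
| "subst \<sigma> (Blind s t) = Blind (subst \<sigma> s) (subst \<sigma> t)"
| "subst \<sigma> (Pair s t) = Pair (subst \<sigma> s) (subst \<sigma> t)"
| "subst \<sigma> (Enc s t) = Enc (subst \<sigma> s) (subst \<sigma> t)"
| "subst \<sigma> (Fn f ts) = Fn f (map (subst \<sigma>) ts)"

fun vars :: "'f trm \<Rightarrow> nat set" where
  "vars (Var x) = {x}"
| "vars (Nm n) = {}"
| "vars (Pub t) = vars t"
| "vars (Sign s t) = vars s \<union> vars t"
| "vars (Blind s t) = vars s \<union> vars t"
| "vars (Pair s t) = vars s \<union> vars t"
| "vars (Enc s t) = vars s \<union> vars t"
| "vars (Fn f ts) = \<Union> (set (map vars ts))"

definition ground :: "'f trm \<Rightarrow> bool" where
  "ground t \<longleftrightarrow> vars t = {}"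

fun syms :: "'f trm \<Rightarrow> 'f set" where
  "syms (Var x) = {}"
| "syms (Nm n) = {}"
| "syms (Pub t) = syms t"
| "syms (Sign s t) = syms s \<union> syms t"
| "syms (Blind s t) = syms s \<union> syms t"
| "syms (Pair s t) = syms s \<union> syms t"
| "syms (Enc s t) = syms s \<union> syms t"
| "syms (Fn f ts) = insert f (\<Union> (set (map syms ts)))"

fun is_Eterm :: "'f trm \<Rightarrow> bool" where
  "is_Eterm (Var x) = True"
| "is_Eterm (Fn f ts) = (\<forall>t\<in>set ts. is_Eterm t)"
| "is_Eterm _ = False"

fun term_ok :: "('f \<Rightarrow> nat) \<Rightarrow> 'f trm \<Rightarrow> bool" where
  "term_ok ar (Var x) = True"
| "term_ok ar (Nm n) = True"
| "term_ok ar (Pub t) = term_ok ar t"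
| "term_ok ar (Sign s t) = (term_ok ar s \<and> term_ok ar t)"
| "term_ok ar (Blind s t) = (term_ok ar s \<and> term_ok ar t)"
| "term_ok ar (Pair s t) = (term_ok ar s \<and> term_ok ar t)"
| "term_ok ar (Enc s t) = (term_ok ar s \<and> term_ok ar t)"
| "term_ok ar (Fn f ts) = (length ts = ar f \<and> (\<forall>t\<in>set ts. term_ok ar t))"

fun subterms :: "'f trm \<Rightarrow> 'f trm set" where
  "subterms (Var x) = {Var x}"
| "subterms (Nm n) = {Nm n}"
| "subterms (Pub t) = insert (Pub t) (subterms t)"
| "subterms (Sign s t) = insert (Sign s t) (subterms s \<union> subterms t)"
| "subterms (Blind s t) = insert (Blind s t) (subterms s \<union> subterms t)"
| "subterms (Pair s t) = insert (Pair s t) (subterms s \<union> subterms t)"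
| "subterms (Enc s t) = insert (Enc s t) (subterms s \<union> subterms t)"
| "subterms (Fn f ts) = insert (Fn f ts) (\<Union> (set (map subterms ts)))"

fun guarded :: "'f trm \<Rightarrow> bool" where
  "guarded (Fn f ts) = False"
| "guarded _ = True"

inductive ac_eq :: "'f set \<Rightarrow> 'f trm \<Rightarrow> 'f trm \<Rightarrow> bool" for ac where
  ac_refl: "ac_eq ac t t"
| ac_sym: "ac_eq ac s t \<Longrightarrow> ac_eq ac t s"
| ac_trans: "ac_eq ac s t \<Longrightarrow> ac_eq ac t u \<Longrightarrow> ac_eq ac s u"
| ac_comm: "a \<in> ac \<Longrightarrow> ac_eq ac (Fn a [x, y]) (Fn a [y, x])"
| ac_assoc: "a \<in> ac \<Longrightarrow> ac_eq ac (Fn a [x, Fn a [y, z]]) (Fn a [Fn a [x, y], z])"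
| ac_Pub: "ac_eq ac s t \<Longrightarrow> ac_eq ac (Pub s) (Pub t)"
| ac_Sign: "ac_eq ac s s' \<Longrightarrow> ac_eq ac t t' \<Longrightarrow> ac_eq ac (Sign s t) (Sign s' t')"
| ac_Blind: "ac_eq ac s s' \<Longrightarrow> ac_eq ac t t' \<Longrightarrow> ac_eq ac (Blind s t) (Blind s' t')"
| ac_Pair: "ac_eq ac s s' \<Longrightarrow> ac_eq ac t t' \<Longrightarrow> ac_eq ac (Pair s t) (Pair s' t')"
| ac_Enc: "ac_eq ac s s' \<Longrightarrow> ac_eq ac t t' \<Longrightarrow> ac_eq ac (Enc s t) (Enc s' t')"
| ac_Fn: "list_all2 (ac_eq ac) ss ts \<Longrightarrow> ac_eq ac (Fn f ss) (Fn f ts)"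

inductive rstep :: "('f trm \<times> 'f trm) set \<Rightarrow> 'f trm \<Rightarrow> 'f trm \<Rightarrow> bool" for R where
  rs_rule: "(l, r) \<in> R \<Longrightarrow> rstep R (subst \<sigma> l) (subst \<sigma> r)"
| rs_Pub: "rstep R s t \<Longrightarrow> rstep R (Pub s) (Pub t)"
| rs_Sign1: "rstep R s s' \<Longrightarrow> rstep R (Sign s t) (Sign s' t)"
| rs_Sign2: "rstep R t t' \<Longrightarrow> rstep R (Sign s t) (Sign s t')"
| rs_Blind1: "rstep R s s' \<Longrightarrow> rstep R (Blind s t) (Blind s' t)"
| rs_Blind2: "rstep R t t' \<Longrightarrow> rstep R (Blind s t) (Blind s t')"
| rs_Pair1: "rstep R s s' \<Longrightarrow> rstep R (Pair s t) (Pair s' t)"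
| rs_Pair2: "rstep R t t' \<Longrightarrow> rstep R (Pair s t) (Pair s t')"
| rs_Enc1: "rstep R s s' \<Longrightarrow> rstep R (Enc s t) (Enc s' t)"
| rs_Enc2: "rstep R t t' \<Longrightarrow> rstep R (Enc s t) (Enc s t')"
| rs_Fn: "rstep R s t \<Longrightarrow> rstep R (Fn f (xs @ s # ys)) (Fn f (xs @ t # ys))"

definition acstep :: "'f set \<Rightarrow> ('f trm \<times> 'f trm) set \<Rightarrow> 'f trm \<Rightarrow> 'f trm \<Rightarrow> bool" where
  "acstep ac R s t \<longleftrightarrow> (\<exists>s' t'. ac_eq ac s s' \<and> rstep R s' t' \<and> ac_eq ac t' t)"

definition normal :: "'f set \<Rightarrow> ('f trm \<times> 'f trm) set \<Rightarrow> 'f trm \<Rightarrow> bool" where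
  "normal ac R t \<longleftrightarrow> \<not> (\<exists>u. acstep ac R t u)"

text \<open>Equality modulo E, where E is presented by R (together with AC).\<close>
definition eqE :: "'f set \<Rightarrow> ('f trm \<times> 'f trm) set \<Rightarrow> 'f trm \<Rightarrow> 'f trm \<Rightarrow> bool" where
  "eqE ac R = (\<lambda>x y. rstep R x y \<or> rstep R y x \<or> ac_eq ac x y)\<^sup>*\<^sup>*"

definition terminating_modAC :: "'f set \<Rightarrow> ('f trm \<times> 'f trm) set \<Rightarrow> bool" where
  "terminating_modAC ac R \<longleftrightarrow> wfP (\<lambda>t s. acstep ac R s t)"

definition confluent_modAC :: "'f set \<Rightarrow> ('f trm \<times> 'f trm) set \<Rightarrow> bool" where
  "confluent_modAC ac R \<longleftrightarrow>
     (\<forall>s t. eqE ac R s t \<longrightarrow>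
        (\<exists>u v. (acstep ac R)\<^sup>*\<^sup>* s u \<and> (acstep ac R)\<^sup>*\<^sup>* t v \<and> ac_eq ac u v))"

text \<open>Standing assumptions on E. ar: arities of the symbols of Sigma_E;
ac: the AC symbols; thy f: index i of the theory E_i whose signature contains f
(so the signatures Sigma_i are pairwise disjoint, and disjoint from the constructors
by construction); R: the rewrite system R_E.\<close>
definition rules_of :: "('f \<Rightarrow> nat) \<Rightarrow> ('f trm \<times> 'f trm) set \<Rightarrow> nat \<Rightarrow> ('f trm \<times> 'f trm) set" where
  "rules_of thy R i = {(l, r) \<in> R. syms l \<union> syms r \<subseteq> {f. thy f = i}}"

definition E_setting :: "('f \<Rightarrow> nat) \<Rightarrow> 'f set \<Rightarrow> ('f \<Rightarrow> nat) \<Rightarrow> ('f trm \<times> 'f trm) set \<Rightarrow> bool" where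
  "E_setting ar ac thy R \<longleftrightarrow>
     (\<forall>a\<in>ac. ar a = 2)
   \<and> (\<forall>i. \<forall>a\<in>ac. \<forall>b\<in>ac. thy a = i \<and> thy b = i \<longrightarrow> a = b)
   \<and> (\<forall>(l, r)\<in>R. is_Eterm l \<and> is_Eterm r \<and> term_ok ar l \<and> term_ok ar r
                 \<and> (\<forall>x. l \<noteq> Var x) \<and> vars r \<subseteq> vars l
                 \<and> (\<exists>i. syms l \<union> syms r \<subseteq> {f. thy f = i}))
   \<and> (\<forall>i. terminating_modAC ac (rules_of thy R i) \<and> confluent_modAC ac (rules_of thy R i))
   \<and> terminating_modAC ac R \<and> confluent_modAC ac R"

text \<open>Closure of a set of terms under E-contexts: the terms C[M_1,...,M_k] with
C built from symbols of Sigma_E only and M_i in the set.\<close>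
inductive_set Eclosure :: "('f \<Rightarrow> nat) \<Rightarrow> 'f trm set \<Rightarrow> 'f trm set" for ar \<Gamma> where
  ec_base: "M \<in> \<Gamma> \<Longrightarrow> M \<in> Eclosure ar \<Gamma>"
| ec_fn: "length ts = ar f \<Longrightarrow> (\<forall>t\<in>set ts. t \<in> Eclosure ar \<Gamma>) \<Longrightarrow> Fn f ts \<in> Eclosure ar \<Gamma>"

definition wf_seq :: "('f \<Rightarrow> nat) \<Rightarrow> 'f set \<Rightarrow> ('f trm \<times> 'f trm) set \<Rightarrow> 'f trm set \<Rightarrow> 'f trm \<Rightarrow> bool" where
  "wf_seq ar ac R \<Gamma> M \<longleftrightarrow> finite \<Gamma> \<and>
     (\<forall>t\<in>insert M \<Gamma>. ground t \<and> term_ok ar t \<and> normal ac R t)"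

text \<open>Derivability in S; the flag c says whether (cut) may be used.
deriv ar ac R False G M means that G |- M has a cut-free derivation.\<close>
inductive deriv :: "('f \<Rightarrow> nat) \<Rightarrow> 'f set \<Rightarrow> ('f trm \<times> 'f trm) set \<Rightarrow> bool
                     \<Rightarrow> 'f trm set \<Rightarrow> 'f trm \<Rightarrow> bool"
  for ar ac R where
  r_id: "wf_seq ar ac R \<Gamma> M \<Longrightarrow> C \<in> Eclosure ar \<Gamma> \<Longrightarrow> eqE ac R M C
         \<Longrightarrow> deriv ar ac R c \<Gamma> M"
| r_cut: "wf_seq ar ac R \<Gamma> T \<Longrightarrow> c \<Longrightarrow> wf_seq ar ac R \<Gamma> M
          \<Longrightarrow> deriv ar ac R c \<Gamma> M \<Longrightarrow> deriv ar ac R c (insert M \<Gamma>) T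
          \<Longrightarrow> deriv ar ac R c \<Gamma> T"
| r_pL: "wf_seq ar ac R (insert (Pair M N) \<Gamma>) T
         \<Longrightarrow> deriv ar ac R c (insert M (insert N (insert (Pair M N) \<Gamma>))) T
         \<Longrightarrow> deriv ar ac R c (insert (Pair M N) \<Gamma>) T"
| r_pR: "wf_seq ar ac R \<Gamma> (Pair M N)
         \<Longrightarrow> deriv ar ac R c \<Gamma> M \<Longrightarrow> deriv ar ac R c \<Gamma> N
         \<Longrightarrow> deriv ar ac R c \<Gamma> (Pair M N)"
| r_eL: "wf_seq ar ac R (insert (Enc M K) \<Gamma>) N
         \<Longrightarrow> deriv ar ac R c (insert (Enc M K) \<Gamma>) K
         \<Longrightarrow> deriv ar ac R c (insert M (insert K (insert (Enc M K) \<Gamma>))) N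
         \<Longrightarrow> deriv ar ac R c (insert (Enc M K) \<Gamma>) N"
| r_eR: "wf_seq ar ac R \<Gamma> (Enc M K)
         \<Longrightarrow> deriv ar ac R c \<Gamma> M \<Longrightarrow> deriv ar ac R c \<Gamma> K
         \<Longrightarrow> deriv ar ac R c \<Gamma> (Enc M K)"
| r_signL: "wf_seq ar ac R (insert (Sign M K) (insert (Pub L) \<Gamma>)) N
         \<Longrightarrow> ac_eq ac K L
         \<Longrightarrow> deriv ar ac R c (insert M (insert (Sign M K) (insert (Pub L) \<Gamma>))) N
         \<Longrightarrow> deriv ar ac R c (insert (Sign M K) (insert (Pub L) \<Gamma>)) N"
| r_signR: "wf_seq ar ac R \<Gamma> (Sign M K)
         \<Longrightarrow> deriv ar ac R c \<Gamma> M \<Longrightarrow> deriv ar ac R c \<Gamma> K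
         \<Longrightarrow> deriv ar ac R c \<Gamma> (Sign M K)"
| r_blindL1: "wf_seq ar ac R (insert (Blind M K) \<Gamma>) N
         \<Longrightarrow> deriv ar ac R c (insert (Blind M K) \<Gamma>) K
         \<Longrightarrow> deriv ar ac R c (insert M (insert K (insert (Blind M K) \<Gamma>))) N
         \<Longrightarrow> deriv ar ac R c (insert (Blind M K) \<Gamma>) N"
| r_blindR: "wf_seq ar ac R \<Gamma> (Blind M K)
         \<Longrightarrow> deriv ar ac R c \<Gamma> M \<Longrightarrow> deriv ar ac R c \<Gamma> K
         \<Longrightarrow> deriv ar ac R c \<Gamma> (Blind M K)"
| r_blindL2: "wf_seq ar ac R (insert (Sign (Blind M Rr) K) \<Gamma>) N
         \<Longrightarrow> deriv ar ac R c (insert (Sign (Blind M Rr) K) \<Gamma>) Rr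
         \<Longrightarrow> deriv ar ac R c (insert (Sign M K) (insert Rr (insert (Sign (Blind M Rr) K) \<Gamma>))) N
         \<Longrightarrow> deriv ar ac R c (insert (Sign (Blind M Rr) K) \<Gamma>) N"
| r_gs: "wf_seq ar ac R \<Gamma> M
         \<Longrightarrow> guarded A \<Longrightarrow> (\<exists>t\<in>insert M \<Gamma>. A \<in> subterms t)
         \<Longrightarrow> deriv ar ac R c \<Gamma> A \<Longrightarrow> deriv ar ac R c (insert A \<Gamma>) M
         \<Longrightarrow> deriv ar ac R c \<Gamma> M"

end

theory Submission
  imports Defs
begin


lemma deriv_wf: "deriv ar ac R c \<Gamma> M \<Longrightarrow> wf_seq ar ac R \<Gamma> M"
  by (induction rule: deriv.induct) auto

lemma normal_ac: "ac_eq ac s t \<Longrightarrow> normal ac R s \<Longrightarrow> normal ac R t"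
  unfolding normal_def acstep_def by (meson ac_trans)

lemma acstep_ctx:
  assumes "acstep ac R s u"
    and "\<And>a b. ac_eq ac a b \<Longrightarrow> ac_eq ac (F a) (F b)"
    and "\<And>a b. rstep R a b \<Longrightarrow> rstep R (F a) (F b)"
  shows "acstep ac R (F s) (F u)"
  using assms unfolding acstep_def by blast

lemma list_all2_mid: "(\<And>x. P x x) \<Longrightarrow> P s s' \<Longrightarrow> list_all2 P (xs @ s # ys) (xs @ s' # ys)"
  by (simp add: list_all2_appendI list_all2_refl)

lemma normal_sub1:
  assumes "normal ac R s" "t \<in> set (case s of Pub a \<Rightarrow> [a] | Sign a b \<Rightarrow> [a,b] | Blind a b \<Rightarrow> [a,b]
     | Pair a b \<Rightarrow> [a,b] | Enc a b \<Rightarrow> [a,b] | Fn f ts \<Rightarrow> ts | _ \<Rightarrow> [])"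
  shows "normal ac R t"
proof (rule ccontr)
  assume "\<not> normal ac R t"
  then obtain u where u: "acstep ac R t u" unfolding normal_def by blast
  have "\<exists>v. acstep ac R s v"
  proof (cases s)
    case (Pub a) then show ?thesis using assms u
      by (auto intro!: acstep_ctx[where F=Pub] intro: ac_Pub rs_Pub)
  next
    case (Sign a b) then show ?thesis using assms u
      by (auto intro: acstep_ctx[where F="\<lambda>x. Sign x b"] acstep_ctx[where F="\<lambda>x. Sign a x"]
          ac_Sign ac_refl rs_Sign1 rs_Sign2)
  next
    case (Blind a b) then show ?thesis using assms u
      by (auto intro: acstep_ctx[where F="\<lambda>x. Blind x b"] acstep_ctx[where F="\<lambda>x. Blind a x"]
          ac_Blind ac_refl rs_Blind1 rs_Blind2)
  next
    case (Pair a b) then show ?thesis using assms u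
      by (auto intro: acstep_ctx[where F="\<lambda>x. Pair x b"] acstep_ctx[where F="\<lambda>x. Pair a x"]
          ac_Pair ac_refl rs_Pair1 rs_Pair2)
  next
    case (Enc a b) then show ?thesis using assms u
      by (auto intro: acstep_ctx[where F="\<lambda>x. Enc x b"] acstep_ctx[where F="\<lambda>x. Enc a x"]
          ac_Enc ac_refl rs_Enc1 rs_Enc2)
  next
    case (Fn f ts)
    with assms have "t \<in> set ts" by simp
    then obtain xs ys where ts: "ts = xs @ t # ys" by (meson split_list)
    have "acstep ac R (Fn f (xs @ t # ys)) (Fn f (xs @ u # ys))"
      by (rule acstep_ctx[OF u]) (auto intro: ac_Fn list_all2_mid ac_refl rs_Fn)
    then show ?thesis using Fn ts by blast
  qed (use assms in auto)
  then show False using assms unfolding normal_def by blast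
qed

lemma normal_subterm: "t \<in> subterms s \<Longrightarrow> normal ac R s \<Longrightarrow> normal ac R t"
proof (induction s)
  case (Fn f ts)
  then show ?case
    by (auto dest: normal_sub1[where s="Fn f ts"])
qed (auto dest: normal_sub1)

lemma vars_subterm: "t \<in> subterms s \<Longrightarrow> vars t \<subseteq> vars s"
  by (induction s) auto

lemma term_ok_subterm: "t \<in> subterms s \<Longrightarrow> term_ok ar s \<Longrightarrow> term_ok ar t"
  by (induction s) auto

lemma finite_subterms: "finite (subterms s)"
  by (induction s) auto

lemma self_subterm: "s \<in> subterms s"
  by (cases s) auto



definition isFn :: "'f trm \<Rightarrow> bool" where "isFn t \<longleftrightarrow> (\<exists>f ts. t = Fn f ts)"

definition shp :: "'f set \<Rightarrow> 'f trm \<Rightarrow> 'f trm \<Rightarrow> bool" where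
 "shp ac s t \<longleftrightarrow>
   (\<forall>U V. s = Sign U V \<longrightarrow> (\<exists>U' V'. t = Sign U' V' \<and> ac_eq ac U U' \<and> ac_eq ac V V')) \<and>
   (\<forall>U V. s = Blind U V \<longrightarrow> (\<exists>U' V'. t = Blind U' V' \<and> ac_eq ac U U' \<and> ac_eq ac V V')) \<and>
   (\<forall>U V. s = Pair U V \<longrightarrow> (\<exists>U' V'. t = Pair U' V' \<and> ac_eq ac U U' \<and> ac_eq ac V V')) \<and>
   (\<forall>U V. s = Enc U V \<longrightarrow> (\<exists>U' V'. t = Enc U' V' \<and> ac_eq ac U U' \<and> ac_eq ac V V')) \<and>
   (isFn s \<longrightarrow> isFn t)"

lemma ac_shape: "ac_eq ac s t \<Longrightarrow> shp ac s t \<and> shp ac t s"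
proof (induction rule: ac_eq.induct)
  case (ac_refl t) then show ?case unfolding shp_def by (auto intro: ac_eq.ac_refl)
next
  case (ac_sym s t) then show ?case by blast
next
  case (ac_trans s t u) then show ?case unfolding shp_def
    by (smt (verit) ac_eq.ac_trans)
qed (auto simp: shp_def isFn_def intro: ac_eq.ac_sym)

lemma ac_isFn: "ac_eq ac s t \<Longrightarrow> isFn s = isFn t"
  using ac_shape unfolding shp_def by blast

lemma ac_ctor:
  assumes "ac_eq ac s t" "g \<in> {Sign, Blind, Pair, Enc}" "s = g U V"
  shows "\<exists>U' V'. t = g U' V' \<and> ac_eq ac U U' \<and> ac_eq ac V V'"
  using ac_shape[OF assms(1)] assms(2,3) unfolding shp_def by auto



definition rules_ok :: "('f trm \<times> 'f trm) set \<Rightarrow> bool" where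
  "rules_ok R \<longleftrightarrow> (\<forall>(l, r)\<in>R. is_Eterm l \<and> is_Eterm r \<and> vars r \<subseteq> vars l)"

fun AN :: "'f set \<Rightarrow> ('f trm \<times> 'f trm) set \<Rightarrow> 'f trm \<Rightarrow> bool" where
  "AN ac R (Fn f ts) = (\<forall>t\<in>set ts. AN ac R t)"
| "AN ac R t = normal ac R t"

lemma list_all2_ball_eq:
  "list_all2 (\<lambda>s t. P s = Q t) ss ts \<Longrightarrow> (\<forall>t\<in>set ss. P t) = (\<forall>t\<in>set ts. Q t)"
  by (induction rule: list_all2_induct) auto

lemma AN_ac: "ac_eq ac s t \<Longrightarrow> AN ac R s = AN ac R t"
proof (induction rule: ac_eq.induct)
  case (ac_Fn ss ts f)
  then have "list_all2 (\<lambda>s t. AN ac R s = AN ac R t) ss ts"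
    by (rule list_all2_mono) auto
  then show ?case by (simp add: list_all2_ball_eq)
qed (auto intro: normal_ac ac_eq.intros)

lemma AN_normal: "normal ac R t \<Longrightarrow> AN ac R t"
proof (induction t)
  case (Fn f ts)
  then show ?case using normal_sub1[of ac R "Fn f ts"] by auto
qed auto

lemma AN_subst: "is_Eterm l \<Longrightarrow> AN ac R (subst \<sigma> l) = (\<forall>x\<in>vars l. AN ac R (\<sigma> x))"
  by (induction l) auto

lemma rstep_not_normal: "rstep R s t \<Longrightarrow> \<not> normal ac R s"
  unfolding normal_def acstep_def by (blast intro: ac_refl)

lemma AN_rstep: assumes ok: "rules_ok R" shows "rstep R s t \<Longrightarrow> AN ac R s \<Longrightarrow> AN ac R t"
proof (induction rule: rstep.induct)
  case (rs_rule l r \<sigma>)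
  then have "is_Eterm l" "is_Eterm r" "vars r \<subseteq> vars l" using ok unfolding rules_ok_def by auto
  with rs_rule show ?case by (auto simp: AN_subst)
qed (auto dest: rstep_not_normal[OF rstep.rs_Pub] rstep_not_normal[OF rstep.rs_Sign1] rstep_not_normal[OF rstep.rs_Sign2] rstep_not_normal[OF rstep.rs_Blind1] rstep_not_normal[OF rstep.rs_Blind2] rstep_not_normal[OF rstep.rs_Pair1] rstep_not_normal[OF rstep.rs_Pair2] rstep_not_normal[OF rstep.rs_Enc1] rstep_not_normal[OF rstep.rs_Enc2])

lemma eqE_ac: "ac_eq ac x y \<Longrightarrow> eqE ac R x y"
  unfolding eqE_def by (simp add: r_into_rtranclp)
lemma eqE_r: "rstep R x y \<Longrightarrow> eqE ac R x y"
  unfolding eqE_def by (simp add: r_into_rtranclp)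
lemma eqE_trans: "eqE ac R x y \<Longrightarrow> eqE ac R y z \<Longrightarrow> eqE ac R x z"
  unfolding eqE_def by simp
lemma eqE_sym: "eqE ac R x y \<Longrightarrow> eqE ac R y x"
  unfolding eqE_def
proof (induction rule: rtranclp_induct)
  case (step y z)
  then show ?case
    by (metis (mono_tags, lifting) ac_sym converse_rtranclp_into_rtranclp)
qed simp

fun rep :: "('f trm \<Rightarrow> bool) \<Rightarrow> 'f trm \<Rightarrow> 'f trm \<Rightarrow> 'f trm" where
  "rep bad x0 (Fn f ts) = Fn f (map (rep bad x0) ts)"
| "rep bad x0 t = (if bad t then x0 else t)"

lemma rep_ac:
  assumes inv: "\<And>s t. ac_eq ac s t \<Longrightarrow> bad s = bad t"
  shows "ac_eq ac s t \<Longrightarrow> ac_eq ac (rep bad x0 s) (rep bad x0 t)"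
proof (induction rule: ac_eq.induct)
  case (ac_Fn ss ts f)
  then have "list_all2 (ac_eq ac) (map (rep bad x0) ss) (map (rep bad x0) ts)"
    by (auto simp: list_all2_map1 list_all2_map2 elim: list_all2_mono)
  then show ?case by (simp add: ac_eq.ac_Fn)
next
  case (ac_Pub s t)
  then show ?case using inv[OF ac_eq.ac_Pub[OF ac_Pub.hyps]] by (auto intro: ac_eq.intros)
next
  case (ac_Sign s s' t t')
  then show ?case using inv[OF ac_eq.ac_Sign[OF ac_Sign.hyps]] by (auto intro: ac_eq.intros)
next
  case (ac_Blind s s' t t')
  then show ?case using inv[OF ac_eq.ac_Blind[OF ac_Blind.hyps]] by (auto intro: ac_eq.intros)
next
  case (ac_Pair s s' t t')
  then show ?case using inv[OF ac_eq.ac_Pair[OF ac_Pair.hyps]] by (auto intro: ac_eq.intros)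
next
  case (ac_Enc s s' t t')
  then show ?case using inv[OF ac_eq.ac_Enc[OF ac_Enc.hyps]] by (auto intro: ac_eq.intros)
qed (auto intro: ac_eq.intros)

lemma rep_subst: "is_Eterm l \<Longrightarrow> rep bad x0 (subst \<sigma> l) = subst (rep bad x0 \<circ> \<sigma>) l"
  by (induction l) auto

lemma rep_rstep: assumes ok: "rules_ok R" shows "rstep R s t \<Longrightarrow> AN ac R s \<Longrightarrow> rstep R (rep bad x0 s) (rep bad x0 t)"
proof (induction rule: rstep.induct)
  case (rs_rule l r \<sigma>)
  then have "is_Eterm l" "is_Eterm r" using ok unfolding rules_ok_def by auto
  with rs_rule show ?case by (simp add: rep_subst rstep.rs_rule)
next
  case (rs_Fn s t f xs ys)
  then show ?case by (simp add: rstep.rs_Fn)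
qed (auto dest: rstep_not_normal[OF rstep.rs_Pub] rstep_not_normal[OF rstep.rs_Sign1] rstep_not_normal[OF rstep.rs_Sign2] rstep_not_normal[OF rstep.rs_Blind1] rstep_not_normal[OF rstep.rs_Blind2] rstep_not_normal[OF rstep.rs_Pair1] rstep_not_normal[OF rstep.rs_Pair2] rstep_not_normal[OF rstep.rs_Enc1] rstep_not_normal[OF rstep.rs_Enc2])

lemma rep_acsteps:
  assumes ok: "rules_ok R" and inv: "\<And>s t. ac_eq ac s t \<Longrightarrow> bad s = bad t"
  shows "(acstep ac R)\<^sup>*\<^sup>* s v \<Longrightarrow> AN ac R s \<Longrightarrow> eqE ac R (rep bad x0 s) (rep bad x0 v) \<and> AN ac R v"
proof (induction rule: rtranclp_induct)
  case base
  then show ?case by (simp add: eqE_def)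
next
  case (step u v)
  then have IH: "eqE ac R (rep bad x0 s) (rep bad x0 u)" "AN ac R u" by auto
  from step(2) obtain u' v' where a: "ac_eq ac u u'" "rstep R u' v'" "ac_eq ac v' v"
    unfolding acstep_def by blast
  have "AN ac R u'" using IH(2) a(1) AN_ac by blast
  then have r: "rstep R (rep bad x0 u') (rep bad x0 v')" "AN ac R v'"
    using rep_rstep[OF ok a(2)] AN_rstep[OF ok a(2)] by auto
  have "AN ac R v" using r(2) a(3) AN_ac by blast
  moreover have "eqE ac R (rep bad x0 u) (rep bad x0 v)"
  proof -
    have "ac_eq ac (rep bad x0 u) (rep bad x0 u')" "ac_eq ac (rep bad x0 v') (rep bad x0 v)"
      using rep_ac[where ac=ac and bad=bad, OF inv] a by auto
    then show ?thesis using r(1) eqE_ac eqE_r eqE_trans by metis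
  qed
  ultimately show ?case using IH(1) unfolding eqE_def by auto
qed



lemma Eclosure_mono: "C \<in> Eclosure ar \<Gamma> \<Longrightarrow> \<Gamma> \<subseteq> \<Gamma>' \<Longrightarrow> C \<in> Eclosure ar \<Gamma>'"
  by (induction rule: Eclosure.induct) (auto intro: Eclosure.intros)

lemma Eclosure_AN: "C \<in> Eclosure ar \<Gamma> \<Longrightarrow> \<forall>L\<in>\<Gamma>. normal ac R L \<Longrightarrow> AN ac R C"
  by (induction rule: Eclosure.induct) (auto intro: AN_normal)

lemma list_choice: "\<forall>t\<in>set ts. \<exists>t'. P t t' \<Longrightarrow> \<exists>ts'. list_all2 P ts ts'"
proof (induction ts)
  case (Cons a ts)
  then obtain ts' a' where "list_all2 P ts ts'" "P a a'" by auto
  then show ?case by (intro exI[of _ "a' # ts'"]) auto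
qed (rule exI[of _ "[]"], simp)

lemma list_all2_set2: "list_all2 P xs ys \<Longrightarrow> y \<in> set ys \<Longrightarrow> \<exists>x. P x y"
  by (induction rule: list_all2_induct) auto

lemma Eclosure_ac:
  "C \<in> Eclosure ar \<Delta> \<Longrightarrow> \<forall>t\<in>\<Delta>. \<exists>t'\<in>\<Delta>'. ac_eq ac t t' \<Longrightarrow> \<exists>C'\<in>Eclosure ar \<Delta>'. ac_eq ac C C'"
proof (induction rule: Eclosure.induct)
  case (ec_base M)
  then show ?case by (auto intro: Eclosure.ec_base)
next
  case (ec_fn ts f)
  have "\<forall>t\<in>set ts. \<exists>t'. t' \<in> Eclosure ar \<Delta>' \<and> ac_eq ac t t'"
  proof
    fix t assume "t \<in> set ts"
    with ec_fn(2) have "\<exists>C'\<in>Eclosure ar \<Delta>'. ac_eq ac t C'" using ec_fn(3) by simp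
    then show "\<exists>t'. t' \<in> Eclosure ar \<Delta>' \<and> ac_eq ac t t'" by blast
  qed
  from list_choice[OF this] obtain ts' where l: "list_all2 (\<lambda>t t'. t' \<in> Eclosure ar \<Delta>' \<and> ac_eq ac t t') ts ts'"
    by blast
  have ac: "ac_eq ac (Fn f ts) (Fn f ts')"
    by (intro ac_eq.ac_Fn, rule list_all2_mono[OF l], simp)
  have "length ts' = ar f" using l ec_fn(1) by (simp add: list_all2_lengthD)
  moreover have "\<forall>t\<in>set ts'. t \<in> Eclosure ar \<Delta>'" using list_all2_set2[OF l] by blast
  ultimately have "Fn f ts' \<in> Eclosure ar \<Delta>'" by (rule Eclosure.ec_fn)
  then show ?case using ac by blast
qed

lemma Eclosure_rep:
  "C \<in> Eclosure ar \<Delta> \<Longrightarrow> \<forall>L\<in>\<Delta>. rep bad x0 L \<in> Eclosure ar G \<Longrightarrow> rep bad x0 C \<in> Eclosure ar G"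
proof (induction rule: Eclosure.induct)
  case (ec_fn ts f)
  then show ?case by (simp, intro Eclosure.ec_fn) auto
qed simp

fun aliens :: "'f trm \<Rightarrow> 'f trm set" where
  "aliens (Fn f ts) = \<Union> (set (map aliens ts))"
| "aliens t = {t}"

lemma aliens_sub: "a \<in> aliens t \<Longrightarrow> a \<in> subterms t \<and> guarded a"
  by (induction t) auto

lemma rep_id: "\<forall>a\<in>aliens t. \<not> bad a \<Longrightarrow> rep bad x0 t = t"
  by (induction t) (auto simp: map_idI)

lemma rep_guarded: "guarded t \<Longrightarrow> rep bad x0 t = (if bad t then x0 else t)"
  by (cases t) auto



definition wfs :: "('f \<Rightarrow> nat) \<Rightarrow> 'f set \<Rightarrow> ('f trm \<times> 'f trm) set \<Rightarrow> 'f trm set \<Rightarrow> bool" where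
  "wfs ar ac R G \<longleftrightarrow> finite G \<and> (\<forall>t\<in>G. ground t \<and> term_ok ar t \<and> normal ac R t)"

definition cov :: "'f trm set \<Rightarrow> 'f trm set \<Rightarrow> bool" where
  "cov G \<Delta> \<longleftrightarrow> (\<forall>t\<in>\<Delta>. t \<in> G \<or> (\<exists>g U V. g \<in> {Sign, Blind, Pair, Enc} \<and> t = g U V \<and> U \<in> G \<and> V \<in> G))"

lemma wf_seq_G: "wf_seq ar ac R \<Delta> N \<Longrightarrow> wfs ar ac R G \<Longrightarrow> wf_seq ar ac R G N"
  unfolding wf_seq_def wfs_def by auto

lemma wf_seq_mem: "wf_seq ar ac R \<Delta> N \<Longrightarrow> t \<in> insert N \<Delta> \<Longrightarrow> ground t \<and> term_ok ar t \<and> normal ac R t"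
  unfolding wf_seq_def by auto

lemma wfs_insert: "wfs ar ac R G \<Longrightarrow> ground t \<and> term_ok ar t \<and> normal ac R t \<Longrightarrow> wfs ar ac R (insert t G)"
  unfolding wfs_def by auto

lemma wfs_mono: "wfs ar ac R G \<Longrightarrow> G' \<subseteq> G \<Longrightarrow> wfs ar ac R G'"
  unfolding wfs_def by (auto intro: finite_subset)

lemma wf_sub: "t \<in> subterms s \<Longrightarrow> ground s \<and> term_ok ar s \<and> normal ac R s \<Longrightarrow> ground t \<and> term_ok ar t \<and> normal ac R t"
  unfolding ground_def using vars_subterm term_ok_subterm normal_subterm by blast

lemma normal_steps: "normal ac R s \<Longrightarrow> (acstep ac R)\<^sup>*\<^sup>* s u \<Longrightarrow> u = s"
  by (metis converse_rtranclpE normal_def)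

lemma gs_elim:
  assumes "finite B"
  shows "\<forall>b\<in>B. guarded b \<and> (\<exists>t\<in>insert N G. b \<in> subterms t)
            \<and> (\<forall>H. G \<subseteq> H \<longrightarrow> wfs ar ac R H \<longrightarrow> deriv ar ac R c H b)
    \<Longrightarrow> wfs ar ac R (G \<union> B) \<Longrightarrow> ground N \<and> term_ok ar N \<and> normal ac R N
    \<Longrightarrow> deriv ar ac R c (G \<union> B) N \<Longrightarrow> deriv ar ac R c G N"
  using assms
proof (induction B arbitrary: G rule: finite_induct)
  case empty
  then show ?case by simp
next
  case (insert b B)
  have "deriv ar ac R c (insert b G) N"
  proof (rule insert.IH)
    show "\<forall>b'\<in>B. guarded b' \<and> (\<exists>t\<in>insert N (insert b G). b' \<in> subterms t)
            \<and> (\<forall>H. insert b G \<subseteq> H \<longrightarrow> wfs ar ac R H \<longrightarrow> deriv ar ac R c H b')"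
      using insert.prems(1) by blast
    show "wfs ar ac R (insert b G \<union> B)" using insert.prems(2) by simp
    show "deriv ar ac R c (insert b G \<union> B) N" using insert.prems(4) by simp
  qed (use insert.prems in auto)
  moreover have wG: "wfs ar ac R G" using insert.prems(2) wfs_mono by blast
  moreover have "deriv ar ac R c G b" using insert.prems(1) wG by blast
  moreover have "wf_seq ar ac R G N" using wG insert.prems(3) unfolding wfs_def wf_seq_def by auto
  ultimately show ?case using insert.prems(1) by (intro r_gs[of ar ac R G N b]) auto
qed


lemma ctor_guarded: "g \<in> {Sign, Blind, Pair, Enc} \<Longrightarrow> guarded (g U V)"
  by auto

lemma ctor_sub: "g \<in> {Sign, Blind, Pair, Enc} \<Longrightarrow> U \<in> subterms (g U V) \<and> V \<in> subterms (g U V)"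
  by (auto simp: self_subterm)

lemma ctor_right:
  assumes "g \<in> {Sign, Blind, Pair, Enc}" "wf_seq ar ac R H (g U V)"
    "deriv ar ac R c H U" "deriv ar ac R c H V"
  shows "deriv ar ac R c H (g U V)"
  using assms by (auto intro: r_signR r_blindR r_pR r_eR)

lemma id_case:
  assumes ok: "rules_ok R" and conf: "confluent_modAC ac R"
    and wf: "wf_seq ar ac R \<Delta> N" and C: "C \<in> Eclosure ar \<Delta>" and eq: "eqE ac R N C"
    and cv: "cov G \<Delta>" and wG: "wfs ar ac R G"
  shows "deriv ar ac R False G N"
proof -
  define D where "D = \<Delta> - G"
  define B where "B = {A. (\<exists>t\<in>insert N G. A \<in> subterms t) \<and> guarded A \<and> (\<exists>T\<in>D. ac_eq ac A T)}"
  have Nwf: "ground N \<and> term_ok ar N \<and> normal ac R N" using wf_seq_mem[OF wf] by simp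
  have Dform: "\<exists>g U V. g \<in> {Sign, Blind, Pair, Enc} \<and> T = g U V \<and> U \<in> G \<and> V \<in> G" if "T \<in> D" for T
    using cv that unfolding cov_def D_def by blast
  have finG: "finite G" using wG unfolding wfs_def by simp
  have finB: "finite B"
  proof (rule finite_subset)
    show "B \<subseteq> \<Union> (subterms ` insert N G)" unfolding B_def by blast
    show "finite (\<Union> (subterms ` insert N G))" using finG by (simp add: finite_subterms)
  qed
  have Gwf: "\<forall>t\<in>insert N G. ground t \<and> term_ok ar t \<and> normal ac R t"
    using Nwf wG unfolding wfs_def by auto
  have Bwf: "ground b \<and> term_ok ar b \<and> normal ac R b" if "b \<in> B" for b
    using that Gwf wf_sub unfolding B_def by blast
  have Bder: "\<forall>b\<in>B. \<forall>H. G \<subseteq> H \<longrightarrow> wfs ar ac R H \<longrightarrow> deriv ar ac R False H b"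
  proof (intro ballI allI impI)
    fix b H assume b: "b \<in> B" "G \<subseteq> H" "wfs ar ac R H"
    then obtain T where T: "T \<in> D" "ac_eq ac b T" unfolding B_def by blast
    from Dform[OF T(1)] obtain g U V where g: "g \<in> {Sign, Blind, Pair, Enc}" "T = g U V" "U \<in> G" "V \<in> G"
      by blast
    from ac_ctor[OF ac_sym[OF T(2)] g(1) g(2)] obtain U' V' where
      b': "b = g U' V'" "ac_eq ac U U'" "ac_eq ac V V'" by blast
    have bwf: "ground b \<and> term_ok ar b \<and> normal ac R b" using Bwf b(1) .
    have U'wf: "ground U' \<and> term_ok ar U' \<and> normal ac R U'"
      using wf_sub[OF _ bwf] ctor_sub[OF g(1)] b'(1) by blast
    have V'wf: "ground V' \<and> term_ok ar V' \<and> normal ac R V'"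
      using wf_sub[OF _ bwf] ctor_sub[OF g(1)] b'(1) by blast
    have dU: "deriv ar ac R False H U'"
    proof (rule r_id)
      show "wf_seq ar ac R H U'" using b(3) U'wf unfolding wfs_def wf_seq_def by auto
      show "U \<in> Eclosure ar H" using g(3) b(2) by (auto intro: ec_base)
      show "eqE ac R U' U" using b'(2) by (simp add: ac_sym eqE_ac)
    qed
    have dV: "deriv ar ac R False H V'"
    proof (rule r_id)
      show "wf_seq ar ac R H V'" using b(3) V'wf unfolding wfs_def wf_seq_def by auto
      show "V \<in> Eclosure ar H" using g(4) b(2) by (auto intro: ec_base)
      show "eqE ac R V' V" using b'(3) by (simp add: ac_sym eqE_ac)
    qed
    have "wf_seq ar ac R H b" using b(3) bwf unfolding wfs_def wf_seq_def by auto
    then show "deriv ar ac R False H b" using ctor_right[OF g(1) _ dU dV] b'(1) by simp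
  qed
  define G2 where "G2 = G \<union> B"
  have wG2: "wfs ar ac R G2" using wG finB Bwf unfolding G2_def wfs_def by auto
  define \<Delta>2 where "\<Delta>2 = G2 \<union> {T\<in>\<Delta>. \<not> (\<exists>b\<in>B. ac_eq ac T b)}"
  have "\<forall>t\<in>\<Delta>. \<exists>t'\<in>\<Delta>2. ac_eq ac t t'"
  proof
    fix t assume t: "t \<in> \<Delta>"
    show "\<exists>t'\<in>\<Delta>2. ac_eq ac t t'"
    proof (cases "\<exists>b\<in>B. ac_eq ac t b")
      case True then show ?thesis unfolding \<Delta>2_def G2_def by blast
    next
      case False then show ?thesis using t ac_refl unfolding \<Delta>2_def by blast
    qed
  qed
  from Eclosure_ac[OF C this] obtain C' where C': "C' \<in> Eclosure ar \<Delta>2" "ac_eq ac C C'" by blast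
  define bad where "bad a = ((\<exists>T\<in>D. ac_eq ac a T) \<and> \<not> (\<exists>b\<in>B. ac_eq ac a b))" for a
  define x0 where "x0 = (SOME x. x \<in> G)"
  have inv: "bad s = bad t" if "ac_eq ac s t" for s t
    unfolding bad_def using that by (meson ac_sym ac_trans)
  have noalien: "\<not> bad a" if "t \<in> insert N G" "a \<in> aliens t" for t a
  proof
    assume "bad a"
    have "a \<in> subterms t" "guarded a" using aliens_sub[OF that(2)] by auto
    with \<open>bad a\<close> that(1) have "a \<in> B" unfolding bad_def B_def by blast
    with \<open>bad a\<close> show False unfolding bad_def using ac_refl by blast
  qed
  have repN: "rep bad x0 N = N" using noalien by (intro rep_id) blast
  have repL: "\<forall>L\<in>\<Delta>2. rep bad x0 L \<in> Eclosure ar G2"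
  proof
    fix L assume L: "L \<in> \<Delta>2"
    show "rep bad x0 L \<in> Eclosure ar G2"
    proof (cases "L \<in> G")
      case True
      then have "rep bad x0 L = L" using noalien by (intro rep_id) blast
      then show ?thesis using True unfolding G2_def by (auto intro: ec_base)
    next
      case notG: False
      show ?thesis
      proof (cases "L \<in> B")
        case True
        then have "guarded L" unfolding B_def by blast
        moreover have "\<not> bad L" using True ac_refl unfolding bad_def by blast
        ultimately have "rep bad x0 L = L" by (simp add: rep_guarded)
        then show ?thesis using True unfolding G2_def by (auto intro: ec_base)
      next
        case False
        then have LD: "L \<in> D" "\<not> (\<exists>b\<in>B. ac_eq ac L b)" using L notG unfolding \<Delta>2_def G2_def D_def by auto
        from Dform[OF LD(1)] obtain g U V where g: "g \<in> {Sign, Blind, Pair, Enc}" "L = g U V" "U \<in> G" "V \<in> G"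
          by blast
        have "guarded L" using g ctor_guarded by blast
        moreover have "bad L" using LD ac_refl unfolding bad_def by blast
        ultimately have "rep bad x0 L = x0" by (simp add: rep_guarded)
        moreover have "x0 \<in> G" unfolding x0_def using g(3) by (rule someI)
        ultimately show ?thesis unfolding G2_def by (auto intro: ec_base)
      qed
    qed
  qed
  have AN: "AN ac R C'"
  proof (rule Eclosure_AN[OF C'(1)])
    show "\<forall>L\<in>\<Delta>2. normal ac R L"
      using wG Bwf wf unfolding \<Delta>2_def G2_def wfs_def wf_seq_def by auto
  qed
  have "eqE ac R N C'" using eq C'(2) eqE_trans eqE_ac by metis
  with conf obtain u v where uv: "(acstep ac R)\<^sup>*\<^sup>* N u" "(acstep ac R)\<^sup>*\<^sup>* C' v" "ac_eq ac u v"
    unfolding confluent_modAC_def by blast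
  have "u = N" using normal_steps uv(1) Nwf by blast
  have e1: "eqE ac R (rep bad x0 C') (rep bad x0 v)"
    by (rule rep_acsteps[THEN conjunct1]) (fact ok, erule inv, fact uv(2), fact AN)
  have e2: "ac_eq ac N (rep bad x0 v)"
  proof -
    have "ac_eq ac (rep bad x0 u) (rep bad x0 v)" by (rule rep_ac) (erule inv, fact uv(3))
    then show ?thesis using repN \<open>u = N\<close> by simp
  qed
  have eN: "eqE ac R N (rep bad x0 C')" using e1 e2 eqE_ac eqE_sym eqE_trans by metis
  have "rep bad x0 C' \<in> Eclosure ar G2" using Eclosure_rep[OF C'(1) repL] .
  then have "deriv ar ac R False G2 N"
    using eN wf_seq_G[OF wf wG2] by (intro r_id) auto
  then show ?thesis
    using gs_elim[OF finB, of N G ar ac R False] Bder wG2 Nwf unfolding G2_def B_def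
    by blast
qed



lemma cov_insert[simp]: "cov G (insert t \<Delta>) \<longleftrightarrow>
   (t \<in> G \<or> (\<exists>g U V. g \<in> {Sign, Blind, Pair, Enc} \<and> t = g U V \<and> U \<in> G \<and> V \<in> G)) \<and> cov G \<Delta>"
  unfolding cov_def by auto

lemma cov_mono: "cov G \<Delta> \<Longrightarrow> G \<subseteq> G' \<Longrightarrow> cov G' \<Delta>"
  unfolding cov_def by blast

lemma cov_ctor: "cov G \<Delta> \<Longrightarrow> h \<in> {Sign, Blind, Pair, Enc} \<Longrightarrow> h P Q \<in> \<Delta> \<Longrightarrow> h P Q \<notin> G
   \<Longrightarrow> P \<in> G \<and> Q \<in> G"
  unfolding cov_def by (drule bspec, assumption) auto

lemma cov_Pub: "cov G \<Delta> \<Longrightarrow> Pub L \<in> \<Delta> \<Longrightarrow> Pub L \<in> G"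
  unfolding cov_def by (drule bspec, assumption) auto

lemma gen:
  assumes ok: "rules_ok R" and conf: "confluent_modAC ac R"
  shows "deriv ar ac R c \<Delta> N \<Longrightarrow> \<not> c \<Longrightarrow> cov G \<Delta> \<Longrightarrow> wfs ar ac R G \<Longrightarrow> deriv ar ac R False G N"
proof (induction arbitrary: G rule: deriv.induct)
  case (r_id \<Gamma> M C c)
  then show ?case using id_case[OF ok conf] by blast
next
  case (r_cut \<Gamma> T c M)
  then show ?case by simp
next
  case (r_pL M N \<Gamma> T c)
  have wfp: "wf_seq ar ac R (insert M (insert N (insert (Pair M N) \<Gamma>))) T" using deriv_wf r_pL.hyps(2) .
  have Mw: "ground M \<and> term_ok ar M \<and> normal ac R M" using wf_seq_mem[OF wfp] by simp
  have Nw: "ground N \<and> term_ok ar N \<and> normal ac R N" using wf_seq_mem[OF wfp] by simp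
  show ?case
  proof (cases "Pair M N \<in> G")
    case True
    let ?G = "insert M (insert N G)"
    have "wfs ar ac R ?G" using r_pL.prems(3) Mw Nw wfs_insert by blast
    moreover have "cov ?G (insert M (insert N (insert (Pair M N) \<Gamma>)))"
      using r_pL.prems(2) cov_mono[of G \<Gamma> ?G] by auto
    ultimately have "deriv ar ac R False ?G T" using r_pL.IH r_pL.prems(1) by blast
    moreover have "wf_seq ar ac R G T" using wf_seq_G r_pL.hyps(1) r_pL.prems(3) by blast
    ultimately have "deriv ar ac R False (insert (Pair M N) G) T"
      by (intro deriv.r_pL) (simp_all add: insert_absorb[OF True])
    then show ?thesis using True by (simp add: insert_absorb)
  next
    case False
    then have "M \<in> G" "N \<in> G" using cov_ctor[OF r_pL.prems(2), of Pair M N] by auto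
    then have "cov G (insert M (insert N (insert (Pair M N) \<Gamma>)))" using r_pL.prems(2) by auto
    then show ?thesis using r_pL.IH r_pL.prems by blast
  qed
next
  case (r_pR \<Gamma> M K c G)
  then have "deriv ar ac R False G M" "deriv ar ac R False G K" by blast+
  moreover have "wf_seq ar ac R G (Pair M K)" using wf_seq_G r_pR.hyps(1) r_pR.prems(3) by blast
  ultimately show ?case by (intro deriv.r_pR)
next
  case (r_eL M K \<Gamma> N c G)
  have wfp: "wf_seq ar ac R (insert M (insert K (insert (Enc M K) \<Gamma>))) N" using deriv_wf r_eL.hyps(3) .
  have Mw: "ground M \<and> term_ok ar M \<and> normal ac R M" using wf_seq_mem[OF wfp] by simp
  have Kw: "ground K \<and> term_ok ar K \<and> normal ac R K" using wf_seq_mem[OF wfp] by simp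
  show ?case
  proof (cases "Enc M K \<in> G")
    case True
    let ?G = "insert M (insert K G)"
    have "wfs ar ac R ?G" using r_eL.prems(3) Mw Kw wfs_insert by blast
    moreover have "cov ?G (insert M (insert K (insert (Enc M K) \<Gamma>)))"
      using r_eL.prems(2) cov_mono[of G \<Gamma> ?G] by auto
    ultimately have d2: "deriv ar ac R False ?G N" using r_eL.IH(2) r_eL.prems(1) by blast
    have d1: "deriv ar ac R False G K" using r_eL.IH(1) r_eL.prems by blast
    have w: "wf_seq ar ac R G N" using wf_seq_G r_eL.hyps(1) r_eL.prems(3) by blast
    have "deriv ar ac R False (insert (Enc M K) G) N"
      by (rule deriv.r_eL) (simp_all add: insert_absorb[OF True] w d1 d2)
    then show ?thesis using True by (simp add: insert_absorb)
  next
    case False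
    then have "M \<in> G" "K \<in> G" using cov_ctor[OF r_eL.prems(2), of Enc M K] by auto
    then have "cov G (insert M (insert K (insert (Enc M K) \<Gamma>)))" using r_eL.prems(2) by auto
    then show ?thesis using r_eL.IH(2) r_eL.prems by blast
  qed
next
  case (r_eR \<Gamma> M K c G)
  then have "deriv ar ac R False G M" "deriv ar ac R False G K" by blast+
  moreover have "wf_seq ar ac R G (Enc M K)" using wf_seq_G r_eR.hyps(1) r_eR.prems(3) by blast
  ultimately show ?case by (intro deriv.r_eR)
next
  case (r_signL M K L \<Gamma> N c G)
  have wfp: "wf_seq ar ac R (insert M (insert (Sign M K) (insert (Pub L) \<Gamma>))) N" using deriv_wf r_signL.hyps(3) .
  have Mw: "ground M \<and> term_ok ar M \<and> normal ac R M" using wf_seq_mem[OF wfp] by simp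
  have PL: "Pub L \<in> G" using cov_Pub[OF r_signL.prems(2)] by simp
  show ?case
  proof (cases "Sign M K \<in> G")
    case True
    let ?G = "insert M G"
    have "wfs ar ac R ?G" using r_signL.prems(3) Mw wfs_insert by blast
    moreover have "cov ?G (insert M (insert (Sign M K) (insert (Pub L) \<Gamma>)))"
      using r_signL.prems(2) cov_mono[of G \<Gamma> ?G] by auto
    ultimately have d2: "deriv ar ac R False ?G N" using r_signL.IH r_signL.prems(1) by blast
    have w: "wf_seq ar ac R G N" using wf_seq_G r_signL.hyps(1) r_signL.prems(3) by blast
    have e: "insert (Sign M K) (insert (Pub L) G) = G" using True PL by auto
    have "deriv ar ac R False (insert (Sign M K) (insert (Pub L) G)) N"
      by (rule deriv.r_signL) (simp_all add: e w d2 r_signL.hyps(2))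
    then show ?thesis using e by simp
  next
    case False
    then have "M \<in> G" using cov_ctor[OF r_signL.prems(2), of Sign M K] by auto
    then have "cov G (insert M (insert (Sign M K) (insert (Pub L) \<Gamma>)))" using r_signL.prems(2) by auto
    then show ?thesis using r_signL.IH r_signL.prems by blast
  qed
next
  case (r_signR \<Gamma> M K c G)
  then have "deriv ar ac R False G M" "deriv ar ac R False G K" by blast+
  moreover have "wf_seq ar ac R G (Sign M K)" using wf_seq_G r_signR.hyps(1) r_signR.prems(3) by blast
  ultimately show ?case by (intro deriv.r_signR)
next
  case (r_blindL1 M K \<Gamma> N c G)
  have wfp: "wf_seq ar ac R (insert M (insert K (insert (Blind M K) \<Gamma>))) N" using deriv_wf r_blindL1.hyps(3) .
  have Mw: "ground M \<and> term_ok ar M \<and> normal ac R M" using wf_seq_mem[OF wfp] by simp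
  have Kw: "ground K \<and> term_ok ar K \<and> normal ac R K" using wf_seq_mem[OF wfp] by simp
  show ?case
  proof (cases "Blind M K \<in> G")
    case True
    let ?G = "insert M (insert K G)"
    have "wfs ar ac R ?G" using r_blindL1.prems(3) Mw Kw wfs_insert by blast
    moreover have "cov ?G (insert M (insert K (insert (Blind M K) \<Gamma>)))"
      using r_blindL1.prems(2) cov_mono[of G \<Gamma> ?G] by auto
    ultimately have d2: "deriv ar ac R False ?G N" using r_blindL1.IH(2) r_blindL1.prems(1) by blast
    have d1: "deriv ar ac R False G K" using r_blindL1.IH(1) r_blindL1.prems by blast
    have w: "wf_seq ar ac R G N" using wf_seq_G r_blindL1.hyps(1) r_blindL1.prems(3) by blast
    have "deriv ar ac R False (insert (Blind M K) G) N"
      by (rule deriv.r_blindL1) (simp_all add: insert_absorb[OF True] w d1 d2)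
    then show ?thesis using True by (simp add: insert_absorb)
  next
    case False
    then have "M \<in> G" "K \<in> G" using cov_ctor[OF r_blindL1.prems(2), of Blind M K] by auto
    then have "cov G (insert M (insert K (insert (Blind M K) \<Gamma>)))" using r_blindL1.prems(2) by auto
    then show ?thesis using r_blindL1.IH(2) r_blindL1.prems by blast
  qed
next
  case (r_blindR \<Gamma> M K c G)
  then have "deriv ar ac R False G M" "deriv ar ac R False G K" by blast+
  moreover have "wf_seq ar ac R G (Blind M K)" using wf_seq_G r_blindR.hyps(1) r_blindR.prems(3) by blast
  ultimately show ?case by (intro deriv.r_blindR)
next
  case (r_blindL2 M Rr K \<Gamma> N c G)
  have wfp: "wf_seq ar ac R (insert (Sign M K) (insert Rr (insert (Sign (Blind M Rr) K) \<Gamma>))) N"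
    using deriv_wf r_blindL2.hyps(3) .
  have SMw: "ground (Sign M K) \<and> term_ok ar (Sign M K) \<and> normal ac R (Sign M K)" using wf_seq_mem[OF wfp, of "Sign M K"] by (simp only: insert_iff simp_thms)
  have Mw: "ground M \<and> term_ok ar M \<and> normal ac R M" using wf_sub[OF _ SMw, of M] by (simp add: self_subterm)
  have Rw: "ground Rr \<and> term_ok ar Rr \<and> normal ac R Rr" using wf_seq_mem[OF wfp] by simp
  have w: "wf_seq ar ac R G N" using wf_seq_G r_blindL2.hyps(1) r_blindL2.prems(3) by blast
  have d1: "deriv ar ac R False G Rr" using r_blindL2.IH(1) r_blindL2.prems by blast
  show ?case
  proof (cases "Sign (Blind M Rr) K \<in> G")
    case True
    let ?G = "insert (Sign M K) (insert Rr G)"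
    have "wfs ar ac R ?G" using r_blindL2.prems(3) SMw Rw wfs_insert by blast
    moreover have "cov ?G (insert (Sign M K) (insert Rr (insert (Sign (Blind M Rr) K) \<Gamma>)))"
      using r_blindL2.prems(2) cov_mono[of G \<Gamma> ?G] by auto
    ultimately have d2: "deriv ar ac R False ?G N" using r_blindL2.IH(2) r_blindL2.prems(1) by blast
    have "deriv ar ac R False (insert (Sign (Blind M Rr) K) G) N"
      by (rule deriv.r_blindL2) (simp_all add: insert_absorb[OF True] w d1 d2)
    then show ?thesis using True by (simp add: insert_absorb)
  next
    case False
    then have BK: "Blind M Rr \<in> G" "K \<in> G" using cov_ctor[OF r_blindL2.prems(2), of Sign "Blind M Rr" K] by auto
    let ?G = "insert M (insert Rr G)"
    have "wfs ar ac R ?G" using r_blindL2.prems(3) Mw Rw wfs_insert by blast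
    moreover have "cov ?G (insert (Sign M K) (insert Rr (insert (Sign (Blind M Rr) K) \<Gamma>)))"
      using r_blindL2.prems(2) cov_mono[of G \<Gamma> ?G] BK by auto
    ultimately have d2: "deriv ar ac R False ?G N" using r_blindL2.IH(2) r_blindL2.prems(1) by blast
    have "deriv ar ac R False (insert (Blind M Rr) G) N"
      by (rule deriv.r_blindL1) (simp_all add: insert_absorb[OF BK(1)] w d1 d2)
    then show ?thesis using BK by (simp add: insert_absorb)
  qed
next
  case (r_gs \<Gamma> M A c G)
  have d1: "deriv ar ac R False G A" using r_gs.IH(1) r_gs.prems by blast
  have wA: "wf_seq ar ac R \<Gamma> A" using deriv_wf r_gs.hyps(4) .
  have Aw: "ground A \<and> term_ok ar A \<and> normal ac R A" using wf_seq_mem[OF wA] by simp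
  show ?case
  proof (cases "cov G (insert A \<Gamma>)")
    case True
    then show ?thesis using r_gs.IH(2) r_gs.prems by blast
  next
    case False
    then have nA: "A \<notin> G" "\<not> (\<exists>g U V. g \<in> {Sign, Blind, Pair, Enc} \<and> A = g U V \<and> U \<in> G \<and> V \<in> G)"
      using r_gs.prems(2) by auto
    have sub: "\<exists>t\<in>insert M G. A \<in> subterms t"
    proof -
      obtain t where t: "t \<in> insert M \<Gamma>" "A \<in> subterms t" using r_gs.hyps(3) by blast
      show ?thesis
      proof (cases "t = M \<or> t \<in> G")
        case True then show ?thesis using t by blast
      next
        case False
        then have "t \<in> \<Gamma>" using t by auto
        then obtain g U V where g: "g \<in> {Sign, Blind, Pair, Enc}" "t = g U V" "U \<in> G" "V \<in> G"
          using r_gs.prems(2) False unfolding cov_def by blast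
        have "subterms t = insert t (subterms U \<union> subterms V)" using g(1,2) by auto
        then have "A \<in> subterms U \<or> A \<in> subterms V" using t(2) nA(2) g by auto
        then show ?thesis using g(3,4) by blast
      qed
    qed
    have "wfs ar ac R (insert A G)" using r_gs.prems(3) Aw wfs_insert by blast
    moreover have "cov (insert A G) (insert A \<Gamma>)" using r_gs.prems(2) cov_mono[of G \<Gamma> "insert A G"] by auto
    ultimately have d2: "deriv ar ac R False (insert A G) M" using r_gs.IH(2) r_gs.prems(1) by blast
    have w: "wf_seq ar ac R G M" using wf_seq_G r_gs.hyps(1) r_gs.prems(3) by blast
    show ?thesis using w r_gs.hyps(2) sub d1 d2 by (rule deriv.r_gs)
  qed
qed



theorem lemma2:
  fixes ar :: "'f \<Rightarrow> nat" and ac :: "'f set" and thy :: "'f \<Rightarrow> nat"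
    and R :: "('f trm \<times> 'f trm) set"
    and f :: "'f trm \<Rightarrow> 'f trm \<Rightarrow> 'f trm"
    and X Y M :: "'f trm" and \<Gamma> :: "'f trm set"
  assumes "E_setting ar ac thy R"
    and "f \<in> {Sign, Blind, Pair, Enc}"
    and "ground X" and "ground Y" and "term_ok ar X" and "term_ok ar Y"
    and "normal ac R X" and "normal ac R Y"
    and "deriv ar ac R False (insert (f X Y) \<Gamma>) M"
  shows "deriv ar ac R False (insert X (insert Y \<Gamma>)) M"
proof -
  have ok: "rules_ok R" using assms(1) unfolding E_setting_def rules_ok_def by auto
  have conf: "confluent_modAC ac R" using assms(1) unfolding E_setting_def by auto
  have wf: "wf_seq ar ac R (insert (f X Y) \<Gamma>) M" using deriv_wf assms(9) .
  have "wfs ar ac R (insert X (insert Y \<Gamma>))"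
    using wf assms(3-8) unfolding wf_seq_def wfs_def by auto
  moreover have "cov (insert X (insert Y \<Gamma>)) (insert (f X Y) \<Gamma>)"
    using assms(2) unfolding cov_def by blast
  ultimately show ?thesis using gen[OF ok conf assms(9)] by blast
qed


end
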